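(* Let $f\in\mathcal B_0$ and $z=x+iy\in\overline{\mathbb C}_+$. Then \[ f(z)=\frac4\pi\int_0^\infty\alpha(x+\alpha)\int_{\mathbb R}\frac{f''(\alpha+i\beta)}{(x+\alpha)^2+(y-\beta)^2}\,d\beta\,d\alpha . \]
   Context: $\mathbb C_+=\{z:\Re z>0\}$. $\mathcal B$ is the space of holomorphic $f$ on $\mathbb C_+$ with $\|f\|_{\mathcal B_0}:=\int_0^\infty\sup_{\beta\in\mathbb R}|f'(\alpha+i\beta)|\,d\alpha<\infty$; such $f$ are bounded, $f(\infty):=\lim_{\Re z\to\infty}f(z)$ exists, and $f$ extends continuously to $\overline{\mathbb C}_+$. $\mathcal B_0:=\{f\in\mathcal B: f(\infty)=0\}$. *)

theory Defs
  imports "HOL-Complex_Analysis.Complex_Analysis"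
begin

definition rhp :: "complex set" where
  "rhp = {z. Re z > 0}"

definition in_B :: "(complex \<Rightarrow> complex) \<Rightarrow> bool" where
  "in_B f \<longleftrightarrow> f holomorphic_on rhp \<and>
     (\<integral>\<^sup>+ a. indicator {0<..} a *
        (SUP b::real. ennreal (cmod (deriv f (Complex a b)))) \<partial>lborel) < \<infinity>"

text \<open>f(oo) = lim_{Re z -> oo} f(z) (uniformly in Im z).\<close>
definition value_at_infinity :: "(complex \<Rightarrow> complex) \<Rightarrow> complex \<Rightarrow> bool" where
  "value_at_infinity f c \<longleftrightarrow> (f \<longlongrightarrow> c) (filtercomap Re at_top)"

definition in_B0 :: "(complex \<Rightarrow> complex) \<Rightarrow> bool" where
  "in_B0 f \<longleftrightarrow> in_B f \<and> value_at_infinity f 0"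

definition ext_val :: "(complex \<Rightarrow> complex) \<Rightarrow> complex \<Rightarrow> complex" where
  "ext_val f z = Lim (at z within rhp) f"

end

theory Submission
  imports Defs "HOL-Real_Asymp.Real_Asymp"
begin

definition hB :: "(complex \<Rightarrow> complex) \<Rightarrow> real \<Rightarrow> ennreal" where
  "hB f s = indicator {0<..} s * (SUP b::real. ennreal (cmod (deriv f (Complex s b))))"

lemma open_rhp: "open rhp"
  unfolding rhp_def by (simp add: open_halfspace_Re_gt)

lemma Complex_eq': "Complex s b = of_real s + \<i> * of_real b"
  by (simp add: Complex_eq)

lemma hB_measurable:
  assumes hol: "f holomorphic_on rhp"
  shows "hB f \<in> borel_measurable borel"
proof (rule borel_measurableI_greater)
  fix y :: ennreal
  have hd: "deriv f holomorphic_on rhp" using hol open_rhp by (rule holomorphic_deriv)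
  have cd: "continuous_on rhp (deriv f)" using hd holomorphic_on_imp_continuous_on by blast
  have eq: "{x \<in> space borel. y < hB f x} = (\<Union>b. {s\<in>{0<..}. y < ennreal (cmod (deriv f (Complex s b)))})"
    by (auto simp: hB_def less_SUP_iff indicator_def)
  have "open {s\<in>{0<..}. y < ennreal (cmod (deriv f (Complex s b)))}" for b
  proof -
    have c1: "continuous_on {0<..} (\<lambda>s::real. Complex s b)"
      unfolding Complex_eq' by (intro continuous_intros)
    have "(\<lambda>s::real. Complex s b) ` {0<..} \<subseteq> rhp" by (auto simp: rhp_def)
    then have "continuous_on {0<..} (\<lambda>s. deriv f (Complex s b))"
      using c1 cd continuous_on_compose2 by blast
    then have "continuous_on {0<..} (\<lambda>s. ennreal (cmod (deriv f (Complex s b))))"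
      by (intro continuous_on_ennreal continuous_on_norm)
    then have "open ((\<lambda>s. ennreal (cmod (deriv f (Complex s b)))) -` {y<..} \<inter> {0<..})"
      by (meson continuous_on_open_vimage open_greaterThan)
    moreover have "{s\<in>{0<..}. y < ennreal (cmod (deriv f (Complex s b)))} = (\<lambda>s. ennreal (cmod (deriv f (Complex s b)))) -` {y<..} \<inter> {0<..}"
      by auto
    ultimately show ?thesis by simp
  qed
  then show "{x \<in> space borel. y < hB f x} \<in> sets borel"
    unfolding eq by (intro borel_open open_UN) auto
qed

lemma filterlim_Re_at_top:
  assumes "filterlim (\<lambda>x. Re (\<phi> x)) at_top F"
  shows "filterlim \<phi> (filtercomap Re at_top) F"
  using assms unfolding filterlim_def
  by (simp add: filtermap_le_iff_le_filtercomap[symmetric] filtermap_filtermap)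

lemma lim_at_inf_compose:
  assumes "(f \<longlongrightarrow> c) (filtercomap Re at_top)" "filterlim (\<lambda>x. Re (\<phi> x)) at_top F"
  shows "((\<lambda>x. f (\<phi> x)) \<longlongrightarrow> c) F"
  using filterlim_compose[OF assms(1) filterlim_Re_at_top[OF assms(2)]] .

lemma deriv_line_has_integral:
  assumes hol: "f holomorphic_on rhp" and w: "Re w > 0" and T: "T \<ge> 0"
  shows "((\<lambda>t. deriv f (w + of_real t)) has_integral (f (w + of_real T) - f w)) {0..T}"
proof -
  have "((\<lambda>t. f (w + of_real t)) has_vector_derivative deriv f (w + of_real t)) (at t within {0..T})"
    if "t \<in> {0..T}" for t
  proof -
    have "((\<lambda>t. w + of_real t) has_vector_derivative 1) (at t)"
      by (auto intro!: derivative_eq_intros)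
    moreover have "(f has_field_derivative deriv f (w + of_real t)) (at (w + of_real t))"
      using that w by (intro holomorphic_derivI[OF hol open_rhp]) (auto simp: rhp_def)
    ultimately have "((f \<circ> (\<lambda>t. w + of_real t)) has_vector_derivative (1 * deriv f (w + of_real t))) (at t)"
      by (rule field_vector_diff_chain_at)
    then show ?thesis by (simp add: o_def has_vector_derivative_at_within)
  qed
  then show ?thesis using fundamental_theorem_of_calculus[OF T, of "\<lambda>t. f (w + of_real t)"] by simp
qed

lemma cont_deriv_line:
  assumes hol: "f holomorphic_on rhp" and w: "Re w > 0"
  shows "continuous_on {0..} (\<lambda>t::real. deriv f (w + of_real t))"
proof -
  have hd: "deriv f holomorphic_on rhp" using hol open_rhp by (rule holomorphic_deriv)
  have cd: "continuous_on rhp (deriv f)" using hd holomorphic_on_imp_continuous_on by blast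
  have "(\<lambda>t::real. w + of_real t) ` {0..} \<subseteq> rhp" using w by (auto simp: rhp_def)
  moreover have "continuous_on {0..} (\<lambda>t::real. w + of_real t)" by (intro continuous_intros)
  ultimately show ?thesis using cd continuous_on_compose2 by blast
qed

lemma f_bound:
  assumes hol: "f holomorphic_on rhp" and fin: "integral\<^sup>N lborel (hB f) < \<infinity>"
    and lim0: "(f \<longlongrightarrow> 0) (filtercomap Re at_top)" and w: "Re w > 0"
  shows "cmod (f w) \<le> enn2real (integral\<^sup>N lborel (hB f))"
proof -
  let ?N = "integral\<^sup>N lborel (hB f)"
  have meas: "hB f \<in> borel_measurable borel" using hB_measurable[OF hol] .
  have shift: "(\<integral>\<^sup>+x. hB f (Re w + x) \<partial>lborel) = ?N"
    using nn_integral_real_affine[OF meas, of 1 "Re w"] by simp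
  have bnd: "cmod (f (w + of_real T) - f w) \<le> enn2real ?N" if T: "T \<ge> 0" for T
  proof -
    let ?g = "\<lambda>t. cmod (deriv f (w + of_real t))"
    have hi: "((\<lambda>t. deriv f (w + of_real t)) has_integral (f (w + of_real T) - f w)) {0..T}"
      by (rule deriv_line_has_integral[OF hol w T])
    have cg: "continuous_on {0..T} ?g"
      using cont_deriv_line[OF hol w] by (intro continuous_on_norm) (auto elim: continuous_on_subset)
    have gi: "?g integrable_on {0..T}" using cg integrable_continuous_real by blast
    have "cmod (f (w + of_real T) - f w) = cmod (integral {0..T} (\<lambda>t. deriv f (w + of_real t)))"
      using hi by (simp add: integral_unique)
    also have "\<dots> \<le> integral {0..T} ?g"
      by (rule integral_norm_bound_integral) (use hi gi in auto)
    finally have le1: "cmod (f (w + of_real T) - f w) \<le> integral {0..T} ?g" .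
    have "ennreal (integral {0..T} ?g) = (\<integral>\<^sup>+ x. ennreal (indicat_real {0..T} x * ?g x) \<partial>lborel)"
      by (rule nn_integral_has_integral_lebesgue[symmetric]) (use gi in \<open>auto simp: has_integral_integral\<close>)
    also have "\<dots> \<le> (\<integral>\<^sup>+x. hB f (Re w + x) \<partial>lborel)"
    proof (rule nn_integral_mono)
      fix x :: real
      show "ennreal (indicat_real {0..T} x * ?g x) \<le> hB f (Re w + x)"
      proof (cases "x \<in> {0..T}")
        case True
        then have pos: "0 < Re w + x" using w by auto
        have "w + of_real x = Complex (Re w + x) (Im w)" by (simp add: complex_eq_iff)
        then have "ennreal (?g x) \<le> (SUP b::real. ennreal (cmod (deriv f (Complex (Re w + x) b))))"
          by (metis (no_types, lifting) SUP_upper UNIV_I)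
        then show ?thesis using True pos by (simp add: hB_def)
      qed simp
    qed
    also have "\<dots> = ?N" by (rule shift)
    finally have "ennreal (integral {0..T} ?g) \<le> ?N" .
    have I0: "0 \<le> integral {0..T} ?g" by (rule integral_nonneg[OF gi]) simp
    have "integral {0..T} ?g = enn2real (ennreal (integral {0..T} ?g))" using I0 by simp
    also have "\<dots> \<le> enn2real ?N" using enn2real_mono[OF \<open>ennreal (integral {0..T} ?g) \<le> ?N\<close>] fin by simp
    finally have "integral {0..T} ?g \<le> enn2real ?N" .
    with le1 show ?thesis by linarith
  qed
  have lim: "((\<lambda>T. f (w + of_real T)) \<longlongrightarrow> 0) at_top"
    by (rule lim_at_inf_compose[OF lim0]) (use filterlim_tendsto_add_at_top[OF tendsto_const filterlim_ident, of "Re w"] in simp)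
  then have "((\<lambda>T. cmod (f (w + of_real T) - f w)) \<longlongrightarrow> cmod (0 - f w)) at_top"
    by (intro tendsto_intros)
  then have "cmod (0 - f w) \<le> enn2real (integral\<^sup>N lborel (hB f))"
    by (rule tendsto_upperbound) (use bnd in \<open>auto simp: eventually_at_top_linorder\<close>)
  then show ?thesis by simp
qed

lemma Cauchy_deriv_bounds:
  assumes hol: "f holomorphic_on rhp" and bnd: "\<And>w. Re w > 0 \<Longrightarrow> cmod (f w) \<le> M"
    and w: "Re w > 0"
  shows "cmod (deriv f w) \<le> 2 * M / Re w" "cmod (deriv (deriv f) w) \<le> 8 * M / (Re w)^2"
proof -
  let ?r = "Re w / 2"
  have r: "?r > 0" using w by simp
  have sub: "cball w ?r \<subseteq> rhp"
  proof
    fix x assume "x \<in> cball w ?r"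
    then have "cmod (w - x) \<le> ?r" by (simp add: dist_norm)
    moreover have "Re w - Re x \<le> cmod (w - x)" using abs_Re_le_cmod[of "w - x"] by simp
    ultimately show "x \<in> rhp" using w by (simp add: rhp_def)
  qed
  have h1: "f holomorphic_on ball w ?r" using hol sub ball_subset_cball by (blast intro: holomorphic_on_subset)
  have c1: "continuous_on (cball w ?r) f"
    using holomorphic_on_imp_continuous_on[OF hol] sub continuous_on_subset by blast
  have b1: "cmod (f x) \<le> M" if "cmod (w - x) = ?r" for x
  proof -
    have "x \<in> rhp" using sub that by (auto simp: dist_norm)
    then show ?thesis using bnd by (auto simp: rhp_def)
  qed
  have "cmod ((deriv ^^ 1) f w) \<le> fact 1 * M / ?r ^ 1"
    by (rule Cauchy_inequality[OF h1 c1 r b1])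
  then show "cmod (deriv f w) \<le> 2 * M / Re w" by (simp add: mult.commute)
  have "cmod ((deriv ^^ 2) f w) \<le> fact 2 * M / ?r ^ 2"
    by (rule Cauchy_inequality[OF h1 c1 r b1])
  then show "cmod (deriv (deriv f) w) \<le> 8 * M / (Re w)^2"
    by (simp add: numeral_2_eq_2 power2_eq_square field_simps)
qed

lemma norm_one_plus_ge:
  fixes u :: complex assumes "Re u \<ge> 0"
  shows "cmod (1 + u) \<ge> 1" "cmod (1 + u) \<ge> cmod u"
proof -
  have "1 \<le> Re (1 + u)" using assms by simp
  also have "\<dots> \<le> cmod (1 + u)" by (rule complex_Re_le_cmod)
  finally show "cmod (1 + u) \<ge> 1" .
  have e1: "(cmod (1+u))^2 = (Re (1+u))^2 + (Im (1+u))^2" by (rule cmod_power2)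
  have e2: "(cmod u)^2 = (Re u)^2 + (Im u)^2" by (rule cmod_power2)
  have "(cmod (1+u))^2 - (cmod u)^2 = 1 + 2 * Re u"
    unfolding e1 e2 by (simp add: power2_eq_square algebra_simps)
  then have "(cmod u)^2 \<le> (cmod (1+u))^2" using assms by linarith
  then show "cmod (1 + u) \<ge> cmod u" by (simp add: power2_le_iff_abs_le)
qed

lemma PL_halfplane:
  fixes h :: "complex \<Rightarrow> complex"
  assumes hol: "h holomorphic_on {w. Re w > s0}" and s0: "s0 < s"
    and bnd: "\<And>w. Re w \<ge> s \<Longrightarrow> cmod (h w) \<le> B"
    and line: "\<And>b. cmod (h (Complex s b)) \<le> m"
    and w0: "Re w0 \<ge> s"
  shows "cmod (h w0) \<le> m"
proof (rule field_le_epsilon)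
  fix \<delta> :: real assume \<delta>: "\<delta> > 0"
  have m0: "m \<ge> 0" using line[of 0] norm_ge_zero order_trans by blast
  have key: "cmod (h w0) \<le> (m + \<delta>) * cmod (1 + of_real \<epsilon> * (w0 - of_real s))" if \<epsilon>: "\<epsilon> > 0" for \<epsilon>
  proof -
    define q where "q w = h w / (1 + of_real \<epsilon> * (w - of_real s))" for w
    have den: "1 + of_real \<epsilon> * (w - of_real s) \<noteq> 0" if "Re w \<ge> s" for w
    proof -
      have "1 \<le> cmod (1 + of_real \<epsilon> * (w - of_real s))"
        by (rule norm_one_plus_ge) (use that \<epsilon> in simp)
      then show ?thesis by auto
    qed
    have B0: "B \<ge> 0" using bnd[of s] norm_ge_zero order_trans by (metis complex_of_real_def dual_order.refl Re_complex_of_real)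
    define R where "R = max (max (\<bar>Im w0\<bar> + 1) (Re w0 - s + 1)) (B / (\<epsilon> * (m + \<delta>)) + 1)"
    have R: "R > \<bar>Im w0\<bar>" "R > Re w0 - s" "R > B / (\<epsilon> * (m + \<delta>))" "R > 0"
      unfolding R_def using \<delta> \<epsilon> m0 B0 by auto
    let ?S = "box (Complex s (-R)) (Complex (s + R) R)"
    show ?thesis
    proof (cases "Re w0 = s")
      case True
      have "cmod (h w0) \<le> m" using line[of "Im w0"] True by (metis complex_surj)
      also have "\<dots> \<le> (m + \<delta>) * 1" using \<delta> by simp
      also have "\<dots> \<le> (m + \<delta>) * cmod (1 + of_real \<epsilon> * (w0 - of_real s))"
        by (rule mult_left_mono, rule norm_one_plus_ge) (use w0 \<epsilon> m0 \<delta> in auto)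
      finally show ?thesis .
    next
      case False
      have w0S: "w0 \<in> ?S" using False w0 R by (auto simp: in_box_complex_iff)
      have ne: "?S \<noteq> {}" using w0S by auto
      have sub: "cbox (Complex s (-R)) (Complex (s + R) R) \<subseteq> {w. Re w \<ge> s}"
        by (auto simp: in_cbox_complex_iff)
      have sub2: "{w. Re w \<ge> s} \<subseteq> {w. Re w > s0}" using s0 by auto
      have holq: "q holomorphic_on {w. Re w \<ge> s}"
        unfolding q_def using den
        by (intro holomorphic_intros holomorphic_on_subset[OF hol sub2]) auto
      have hi: "q holomorphic_on interior ?S"
          using holq sub box_subset_cbox interior_subset by (metis holomorphic_on_subset interior_open[OF open_box] order_trans)
      have ci: "continuous_on (closure ?S) q"
          using holomorphic_on_imp_continuous_on[OF holq] sub ne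
          by (simp add: continuous_on_subset)
      have fr: "cmod (q z) \<le> m + \<delta>" if "z \<in> frontier ?S" for z
      proof -
        from that have zc: "z \<in> cbox (Complex s (-R)) (Complex (s + R) R)" and zb: "z \<notin> ?S"
          using ne by (auto simp: frontier_box)
        have zs: "Re z \<ge> s" using zc by (auto simp: in_cbox_complex_iff)
        have dge1: "1 \<le> cmod (1 + of_real \<epsilon> * (z - of_real s))"
          by (rule norm_one_plus_ge) (use zs \<epsilon> in simp)
        show "cmod (q z) \<le> m + \<delta>"
        proof (cases "Re z = s")
          case True
          have "cmod (q z) = cmod (h z) / cmod (1 + of_real \<epsilon> * (z - of_real s))"
            by (simp add: q_def norm_divide)
          also have "\<dots> \<le> cmod (h z)"
            using dge1 by (simp add: divide_le_eq order_trans[OF _ mult_left_mono[OF dge1]])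
          also have "\<dots> \<le> m" using line[of "Im z"] True by (metis complex_surj)
          finally show ?thesis using \<delta> by simp
        next
          case False
          then have far: "Re z = s + R \<or> Im z = R \<or> Im z = -R"
            using zc zb by (auto simp: in_cbox_complex_iff in_box_complex_iff)
          have "R \<le> cmod (z - of_real s)"
            using far abs_Re_le_cmod[of "z - of_real s"] abs_Im_le_cmod[of "z - of_real s"] R
            by auto
          then have dge: "\<epsilon> * R \<le> cmod (1 + of_real \<epsilon> * (z - of_real s))"
            using norm_one_plus_ge(2)[of "of_real \<epsilon> * (z - of_real s)"] zs \<epsilon>
            by (simp add: norm_mult) (smt (verit) mult_left_mono)
          have "cmod (q z) = cmod (h z) / cmod (1 + of_real \<epsilon> * (z - of_real s))"
            by (simp add: q_def norm_divide)
          also have "\<dots> \<le> B / (\<epsilon> * R)"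
            by (rule frac_le) (use bnd[OF zs] B0 \<epsilon> R dge in auto)
          also have "\<dots> \<le> m + \<delta>"
          proof -
            have "B / (\<epsilon> * (m + \<delta>)) < R" using R by simp
            then have "B < R * (\<epsilon> * (m + \<delta>))" using \<epsilon> \<delta> m0 by (simp add: divide_less_eq)
            then show ?thesis using \<epsilon> R by (simp add: divide_le_eq algebra_simps)
          qed
          finally show ?thesis .
        qed
      qed
      have "cmod (q w0) \<le> m + \<delta>"
        by (rule maximum_modulus_frontier[OF hi ci bounded_box fr w0S])
      then show ?thesis using den[OF w0]
        by (simp add: q_def norm_divide divide_le_eq)
    qed
  qed
  show "cmod (h w0) \<le> m + \<delta>"
  proof (rule field_le_epsilon)
    fix e :: real assume e: "e > 0"
    define \<epsilon> where "\<epsilon> = e / ((m + \<delta>) * (cmod (w0 - of_real s) + 1))"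
    have \<epsilon>: "\<epsilon> > 0" unfolding \<epsilon>_def using e \<delta> m0 by (intro divide_pos_pos mult_pos_pos) (auto intro: add_nonneg_pos)
    have "cmod (h w0) \<le> (m + \<delta>) * cmod (1 + of_real \<epsilon> * (w0 - of_real s))" by (rule key[OF \<epsilon>])
    also have "\<dots> \<le> (m + \<delta>) * (1 + \<epsilon> * cmod (w0 - of_real s))"
      by (rule mult_left_mono) (use \<epsilon> m0 \<delta> norm_triangle_ineq[of 1 "of_real \<epsilon> * (w0 - of_real s)"] in \<open>auto simp: norm_mult\<close>)
    also have "\<dots> \<le> m + \<delta> + e"
    proof -
      have "(m + \<delta>) * (\<epsilon> * cmod (w0 - of_real s)) \<le> (m + \<delta>) * (\<epsilon> * (cmod (w0 - of_real s) + 1))"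
        using \<epsilon> m0 \<delta> by (intro mult_left_mono) auto
      also have "\<dots> = e"
      proof -
        have "(m + \<delta>) * (cmod (w0 - of_real s) + 1) > 0" using m0 \<delta> by (intro mult_pos_pos) (auto intro: add_nonneg_pos)
        then show ?thesis unfolding \<epsilon>_def by (simp add: field_simps)
      qed
      finally show ?thesis by (simp add: algebra_simps)
    qed
    finally show "cmod (h w0) \<le> m + \<delta> + e" .
  qed
qed

definition Gf :: "(complex \<Rightarrow> complex) \<Rightarrow> real \<Rightarrow> real" where
  "Gf f s = enn2real (SUP b::real. ennreal (cmod (deriv f (Complex s b))))"

locale Bclass =
  fixes f :: "complex \<Rightarrow> complex"
  assumes hol: "f holomorphic_on rhp"
    and fin: "integral\<^sup>N lborel (hB f) < \<infinity>"
    and lim0: "(f \<longlongrightarrow> 0) (filtercomap Re at_top)"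
begin

definition "M = enn2real (integral\<^sup>N lborel (hB f))"

lemma M_nonneg: "M \<ge> 0" by (simp add: M_def)

lemma f_bnd: "Re w > 0 \<Longrightarrow> cmod (f w) \<le> M"
  unfolding M_def by (rule f_bound[OF hol fin lim0])

lemma d1_bnd: "Re w > 0 \<Longrightarrow> cmod (deriv f w) \<le> 2 * M / Re w"
  by (rule Cauchy_deriv_bounds(1)[OF hol f_bnd]) auto

lemma d2_bnd: "Re w > 0 \<Longrightarrow> cmod (deriv (deriv f) w) \<le> 8 * M / (Re w)^2"
  by (rule Cauchy_deriv_bounds(2)[OF hol f_bnd]) auto

lemma hol1: "deriv f holomorphic_on rhp"
  using hol open_rhp by (rule holomorphic_deriv)

lemma hol2: "deriv (deriv f) holomorphic_on rhp"
  using hol1 open_rhp by (rule holomorphic_deriv)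

lemma SUP_fin: assumes "s > 0" shows "(SUP b::real. ennreal (cmod (deriv f (Complex s b)))) \<le> ennreal (2 * M / s)"
proof (rule SUP_least)
  fix b :: real
  show "ennreal (cmod (deriv f (Complex s b))) \<le> ennreal (2 * M / s)"
    using d1_bnd[of "Complex s b"] assms by (intro ennreal_leI) simp
qed

lemma SUP_lt_top: "s > 0 \<Longrightarrow> (SUP b::real. ennreal (cmod (deriv f (Complex s b)))) < top"
  using SUP_fin[of s] by (meson ennreal_less_top order.strict_trans1)

lemma hB_eq: "s > 0 \<Longrightarrow> hB f s = ennreal (Gf f s)"
  using SUP_lt_top[of s] by (simp add: hB_def Gf_def)

lemma Gf_nonneg: "Gf f s \<ge> 0" by (simp add: Gf_def)

lemma Gf_upper: assumes "s > 0" shows "cmod (deriv f (Complex s b)) \<le> Gf f s"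
proof -
  have "ennreal (cmod (deriv f (Complex s b))) \<le> (SUP b::real. ennreal (cmod (deriv f (Complex s b))))"
    by (rule SUP_upper) simp
  then have "enn2real (ennreal (cmod (deriv f (Complex s b)))) \<le> Gf f s"
    unfolding Gf_def using SUP_lt_top[OF assms] by (intro enn2real_mono) auto
  then show ?thesis by simp
qed

lemma Gf_least: assumes "\<And>b. cmod (deriv f (Complex s b)) \<le> m" "m \<ge> 0" shows "Gf f s \<le> m"
proof -
  have "(SUP b::real. ennreal (cmod (deriv f (Complex s b)))) \<le> ennreal m"
    by (rule SUP_least) (use assms in \<open>auto intro: ennreal_leI\<close>)
  then have "Gf f s \<le> enn2real (ennreal m)" unfolding Gf_def by (intro enn2real_mono) auto
  then show ?thesis using assms by simp
qed

lemma d1_le_Gf: assumes s: "s > 0" and w: "Re w \<ge> s" shows "cmod (deriv f w) \<le> Gf f s"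
proof (rule PL_halfplane[of "deriv f" 0 s "2 * M / s" "Gf f s" w])
  show "deriv f holomorphic_on {w. 0 < Re w}" using hol1 by (simp add: rhp_def)
  show "0 < s" by fact
  show "cmod (deriv f w) \<le> 2 * M / s" if "s \<le> Re w" for w
  proof -
    have "cmod (deriv f w) \<le> 2 * M / Re w" using d1_bnd[of w] that s by simp
    also have "\<dots> \<le> 2 * M / s" using that s M_nonneg by (intro divide_left_mono) auto
    finally show ?thesis .
  qed
  show "cmod (deriv f (Complex s b)) \<le> Gf f s" for b by (rule Gf_upper[OF s])
  show "s \<le> Re w" by fact
qed

lemma Gf_antimono: assumes "0 < s" "s \<le> t" shows "Gf f t \<le> Gf f s"
  by (rule Gf_least) (use assms d1_le_Gf Gf_nonneg in auto)

definition "Gi s = indicator {0<..} s * Gf f s"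

lemma Gi_hB: "ennreal (Gi s) = hB f s"
  by (cases "s > 0") (simp_all add: Gi_def hB_eq, simp add: hB_def)

lemma Gi_meas: "Gi \<in> borel_measurable borel"
proof -
  have "Gi = (\<lambda>s. enn2real (hB f s))" by (rule ext) (metis Gi_hB Gi_def Gf_nonneg enn2real_ennreal indicator_pos_le mult_nonneg_nonneg)
  then show ?thesis using hB_measurable[OF hol] by simp
qed

lemma Gi_integrable: "integrable lborel Gi"
proof (rule integrableI_nonneg)
  show "Gi \<in> borel_measurable lborel" using Gi_meas by simp
  show "AE x in lborel. 0 \<le> Gi x" by (simp add: Gi_def Gf_nonneg)
  show "(\<integral>\<^sup>+x. ennreal (Gi x) \<partial>lborel) < \<infinity>" using fin by (simp add: Gi_hB)
qed

lemma G_set_integrable: "set_integrable lborel {0<..} (Gf f)"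
proof -
  have "Gi = (\<lambda>x. indicator {0<..} x * Gf f x)" by (rule ext) (simp add: Gi_def)
  then show ?thesis using Gi_integrable by (simp add: set_integrable_def)
qed

end

lemma rect_est:
  fixes h :: "complex \<Rightarrow> complex"
  assumes hol: "h holomorphic_on {w. Re w > a0}" and a0: "a0 < a" and c: "c > 0"
    and bnd: "\<And>w. Re w \<ge> a \<Longrightarrow> cmod (h w) \<le> B"
    and R: "R > \<bar>y\<bar> + c + 1"
  defines "\<zeta> \<equiv> Complex (a + c) y" and "\<zeta>' \<equiv> Complex (a - c) y"
  defines "k \<equiv> \<lambda>w. h w * (\<zeta>' - \<zeta>) / ((\<zeta> - w) * (\<zeta>' - w))"
  shows "cmod (integral {-R..R} (\<lambda>b. k (Complex a b)) - 2 * pi * h \<zeta>) \<le> 8 * c * B * R / (R - \<bar>y\<bar> - c)^2"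
proof -
  define a1 a2 a3 a4 where "a1 = Complex a (-R)" and "a2 = Complex (a+R) (-R)"
    and "a3 = Complex (a+R) R" and "a4 = Complex a R"
  define S where "S = {w. Re w > max a0 (a - c)}"
  define \<phi> where "\<phi> w = - h w * (\<zeta>' - \<zeta>) / (\<zeta>' - w)" for w
  define \<rho> where "\<rho> = R - \<bar>y\<bar> - c"
  have \<rho>: "\<rho> > 1" using R by (simp add: \<rho>_def)
  have R0: "R > 0" using R c by linarith
  have B0: "B \<ge> 0" using bnd[of a] norm_ge_zero order_trans by (metis Re_complex_of_real order_refl)
  have openS: "open S" unfolding S_def by (rule open_halfspace_Re_gt)
  have convS: "convex S" unfolding S_def by (rule convex_halfspace_Re_gt)
  have z'S: "\<zeta>' \<notin> S" by (simp add: S_def \<zeta>'_def)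
  have zS: "\<zeta> \<in> S" using a0 c by (simp add: S_def \<zeta>_def)
  have zz': "\<zeta>' \<noteq> \<zeta>" using c by (simp add: \<zeta>_def \<zeta>'_def complex_eq_iff)
  have holS: "h holomorphic_on S" using hol by (rule holomorphic_on_subset) (auto simp: S_def)
  have hol\<phi>: "\<phi> holomorphic_on S"
    unfolding \<phi>_def using z'S by (intro holomorphic_intros holS) auto
  have keq: "k w = \<phi> w / (w - \<zeta>)" for w
  proof (cases "w = \<zeta> \<or> w = \<zeta>'")
    case True then show ?thesis by (auto simp: k_def \<phi>_def)
  next
    case False
    have e1: "(\<zeta>' - w) * (w - \<zeta>) = - ((\<zeta> - w) * (\<zeta>' - w))" by (simp add: algebra_simps)
    have "\<phi> w / (w - \<zeta>) = - (h w * (\<zeta>' - \<zeta>)) / ((\<zeta>' - w) * (w - \<zeta>))"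
      by (simp add: \<phi>_def divide_divide_eq_left)
    also have "\<dots> = h w * (\<zeta>' - \<zeta>) / ((\<zeta> - w) * (\<zeta>' - w))"
      unfolding e1 by (simp only: minus_divide_divide)
    finally show ?thesis by (simp add: k_def)
  qed
  have kfun: "k = (\<lambda>w. \<phi> w / (w - \<zeta>))" using keq by (rule ext)
  have le13: "Re a1 \<le> Re a3" "Im a1 \<le> Im a3" using R0 by (auto simp: a1_def a3_def)
  have zbox: "\<zeta> \<in> box a1 a3" using R c by (auto simp: in_box_complex_iff a1_def a3_def \<zeta>_def)
  have cboxS: "cbox a1 a3 \<subseteq> S" using a0 c by (auto simp: in_cbox_complex_iff a1_def a3_def S_def)
  have pim: "path_image (rectpath a1 a3) \<subseteq> S - {\<zeta>}"
    using path_image_rectpath_cbox_minus_box[OF le13] cboxS zbox by auto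
  have "((\<lambda>w. \<phi> w / (w - \<zeta>)) has_contour_integral
      complex_of_real (2 * pi) * \<i> * winding_number (rectpath a1 a3) \<zeta> * \<phi> \<zeta>) (rectpath a1 a3)"
    by (rule Cauchy_integral_formula_convex_simple[OF convS hol\<phi> _ valid_path_rectpath pim])
       (use openS zS in \<open>auto simp: interior_open\<close>)
  moreover have "winding_number (rectpath a1 a3) \<zeta> = 1" by (rule winding_number_rectpath[OF zbox])
  moreover have "\<phi> \<zeta> = - h \<zeta>" using zz' by (simp add: \<phi>_def)
  ultimately have ci: "contour_integral (rectpath a1 a3) k = - (2 * pi) * \<i> * h \<zeta>"
    unfolding kfun by (simp add: contour_integral_unique)
  have holk: "k holomorphic_on S - {\<zeta>}"
    unfolding kfun by (intro holomorphic_intros holomorphic_on_subset[OF hol\<phi>]) auto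
  have contk: "continuous_on (S - {\<zeta>}) k"
    using holk holomorphic_on_imp_continuous_on by blast
  have pimeq: "path_image (rectpath a1 a3) = closed_segment a1 a2 \<union> closed_segment a2 a3 \<union> closed_segment a3 a4 \<union> closed_segment a4 a1"
    by (simp add: rectpath_def Let_def path_image_join a1_def a2_def a3_def a4_def Un_assoc)
  have seg: "closed_segment a1 a2 \<subseteq> S - {\<zeta>}" "closed_segment a2 a3 \<subseteq> S - {\<zeta>}"
    "closed_segment a3 a4 \<subseteq> S - {\<zeta>}" "closed_segment a4 a1 \<subseteq> S - {\<zeta>}"
    using pim unfolding pimeq by auto
  have cs: "continuous_on (closed_segment a1 a2) k" "continuous_on (closed_segment a2 a3) k"
    "continuous_on (closed_segment a3 a4) k" "continuous_on (closed_segment a4 a1) k"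
    using seg contk continuous_on_subset by blast+
  have ints: "k contour_integrable_on linepath a1 a2" "k contour_integrable_on linepath a2 a3"
    "k contour_integrable_on linepath a3 a4" "k contour_integrable_on linepath a4 a1"
    using cs by (auto intro: contour_integrable_continuous_linepath)
  have rp: "rectpath a1 a3 = linepath a1 a2 +++ linepath a2 a3 +++ linepath a3 a4 +++ linepath a4 a1"
    by (simp add: rectpath_def Let_def a1_def a2_def a3_def a4_def)
  have split: "contour_integral (rectpath a1 a3) k = contour_integral (linepath a1 a2) k +
      (contour_integral (linepath a2 a3) k + (contour_integral (linepath a3 a4) k + contour_integral (linepath a4 a1) k))"
    unfolding rp using ints by (simp add: contour_integrable_joinI)
  have I4: "contour_integral (linepath a4 a1) k = - (\<i> * integral {-R..R} (\<lambda>b. k (Complex a b)))"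
  proof -
    have "contour_integral (linepath a4 a1) k = - contour_integral (linepath a1 a4) k"
      by (rule contour_integral_reverse_linepath) (use cs(4) in \<open>simp add: closed_segment_commute\<close>)
    also have "contour_integral (linepath a1 a4) k = \<i> * integral {-R..R} (\<lambda>b. k (Complex a b))"
      by (rule contour_integral_linepath_same_Re) (use R0 in \<open>auto simp: a1_def a4_def\<close>)
    finally show ?thesis .
  qed
  have kb: "cmod (k w) \<le> 2 * c * B / \<rho>^2"
    if wa: "Re w \<ge> a" and far: "Im w = R \<or> Im w = -R \<or> Re w = a + R" for w
  proof -
    have d1: "cmod (\<zeta> - w) \<ge> \<rho>" and d2: "cmod (\<zeta>' - w) \<ge> \<rho>"
    proof -
      have "(\<bar>Im (\<zeta> - w)\<bar> \<ge> \<rho> \<and> \<bar>Im (\<zeta>' - w)\<bar> \<ge> \<rho>) \<or> (\<bar>Re (\<zeta> - w)\<bar> \<ge> \<rho> \<and> \<bar>Re (\<zeta>' - w)\<bar> \<ge> \<rho>)"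
        using far c R by (auto simp: \<zeta>_def \<zeta>'_def \<rho>_def)
      then show "cmod (\<zeta> - w) \<ge> \<rho>" "cmod (\<zeta>' - w) \<ge> \<rho>"
        using abs_Im_le_cmod abs_Re_le_cmod order_trans by metis+
    qed
    have "cmod (k w) = cmod (h w) * (2 * c) / (cmod (\<zeta> - w) * cmod (\<zeta>' - w))"
    proof -
      have "\<zeta>' - \<zeta> = - of_real (2 * c)" by (simp add: \<zeta>_def \<zeta>'_def complex_eq_iff)
      then show ?thesis using c by (simp add: k_def norm_mult norm_divide del: of_real_mult)
    qed
    also have "\<dots> \<le> B * (2 * c) / (\<rho> * \<rho>)"
      by (rule frac_le) (use bnd[OF wa] c B0 \<rho> d1 d2 in \<open>auto intro!: mult_mono mult_nonneg_nonneg\<close>)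
    finally show ?thesis by (simp add: power2_eq_square mult_ac)
  qed
  let ?K = "2 * c * B / \<rho>^2"
  have K0: "?K \<ge> 0" using c B0 by simp
  have b1: "cmod (contour_integral (linepath a1 a2) k) \<le> ?K * cmod (a2 - a1)"
    by (rule contour_integral_bound_linepath[OF ints(1) K0])
       (auto intro!: kb simp: closed_segment_same_Im a1_def a2_def closed_segment_eq_real_ivl R0 less_imp_le split: if_splits)
  have b2: "cmod (contour_integral (linepath a2 a3) k) \<le> ?K * cmod (a3 - a2)"
    by (rule contour_integral_bound_linepath[OF ints(2) K0])
       (auto intro!: kb simp: closed_segment_same_Re a2_def a3_def closed_segment_eq_real_ivl R0 less_imp_le split: if_splits)
  have b3: "cmod (contour_integral (linepath a3 a4) k) \<le> ?K * cmod (a4 - a3)"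
    by (rule contour_integral_bound_linepath[OF ints(3) K0])
       (auto intro!: kb simp: closed_segment_same_Im a3_def a4_def closed_segment_eq_real_ivl R0 less_imp_le split: if_splits)
  have n: "cmod (a2 - a1) = R" "cmod (a3 - a2) = 2 * R" "cmod (a4 - a3) = R"
    using R0 by (auto simp: a1_def a2_def a3_def a4_def cmod_def real_sqrt_mult)
  let ?J = "integral {-R..R} (\<lambda>b. k (Complex a b))"
  have "- (2 * pi) * \<i> * h \<zeta> = contour_integral (linepath a1 a2) k +
      (contour_integral (linepath a2 a3) k + (contour_integral (linepath a3 a4) k - \<i> * ?J))"
    using ci split I4 by simp
  then have "\<i> * (?J - 2 * pi * h \<zeta>) = contour_integral (linepath a1 a2) k +
      contour_integral (linepath a2 a3) k + contour_integral (linepath a3 a4) k"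
    by (simp add: algebra_simps)
  then have "cmod (?J - 2 * pi * h \<zeta>) = cmod (contour_integral (linepath a1 a2) k +
      contour_integral (linepath a2 a3) k + contour_integral (linepath a3 a4) k)"
    by (metis norm_ii norm_mult mult_1)
  also have "\<dots> \<le> ?K * R + ?K * (2 * R) + ?K * R"
    using b1 b2 b3 n norm_triangle_le[OF add_mono[OF norm_triangle_ineq]] 
    by (smt (verit) norm_triangle_ineq)
  also have "\<dots> = 8 * c * B * R / \<rho>^2" by (simp add: field_simps)
  finally show ?thesis by (simp add: \<rho>_def)
qed

lemma cauchy_kernel_integrable:
  assumes c: "c > 0"
  shows "integrable lborel (\<lambda>x::real. 1 / (c^2 + (y - x)^2))"
proof -
  have "set_integrable lborel (einterval (-\<infinity>) \<infinity>) (\<lambda>x::real. 1 / (c^2 + (y - x)^2))"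
  proof (rule interval_integral_FTC_nonneg(1)[where F = "\<lambda>x. arctan ((x - y) / c) / c"
        and A = "- (pi/2) / c" and B = "(pi/2) / c"])
    show "- \<infinity> < (\<infinity>::ereal)" by simp
    fix x :: real
    have pos: "c^2 + (y - x)^2 > 0" using c by (intro add_pos_nonneg) auto
    have nz: "c^2 + (y - x)^2 \<noteq> 0" using pos by linarith
    have e: "1 + ((x - y) / c)^2 = (c^2 + (y - x)^2) / c^2"
      using c by (simp add: add_divide_distrib power_divide power2_commute)
    have d: "((\<lambda>x. arctan ((x - y) / c) / c) has_real_derivative (inverse (1 + ((x-y)/c)^2) * (1 / c)) / c) (at x)"
      using c by (auto intro!: derivative_eq_intros)
    have "(inverse (1 + ((x-y)/c)^2) * (1 / c)) / c = 1 / (c^2 + (y - x)^2)"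
    proof -
      have g: "c^2 / D * (1/c) / c = 1 / D" for D using c by (simp add: power2_eq_square)
      show ?thesis unfolding e inverse_divide by (rule g)
    qed
    with d show "((\<lambda>x. arctan ((x - y) / c) / c) has_real_derivative 1 / (c^2 + (y - x)^2)) (at x)" by simp
    show "isCont (\<lambda>x. 1 / (c^2 + (y - x)^2)) x"
      using pos by (intro continuous_intros) auto
  next
    show "AE x in lborel. - \<infinity> < ereal x \<longrightarrow> ereal x < \<infinity> \<longrightarrow> 0 \<le> 1 / (c^2 + (y - x)^2)"
      by simp
    have "((\<lambda>x. arctan ((x - y) / c) / c) \<longlongrightarrow> - (pi/2) / c) at_bot"
      using c by (intro tendsto_intros filterlim_compose[OF tendsto_arctan_at_bot]) (real_asymp, simp)
    then show "(((\<lambda>x. arctan ((x - y) / c) / c) \<circ> real_of_ereal) \<longlongrightarrow> - (pi/2) / c) (at_right (- \<infinity>))"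
      by (simp add: ereal_tendsto_simps1)
    have "((\<lambda>x. arctan ((x - y) / c) / c) \<longlongrightarrow> (pi/2) / c) at_top"
      using c by (intro tendsto_intros filterlim_compose[OF tendsto_arctan_at_top]) (real_asymp, simp)
    then show "(((\<lambda>x. arctan ((x - y) / c) / c) \<circ> real_of_ereal) \<longlongrightarrow> (pi/2) / c) (at_left \<infinity>)"
      by (simp add: ereal_tendsto_simps1)
  qed
  then show ?thesis by (simp add: set_integrable_def)
qed

lemma poisson_line:
  fixes h :: "complex \<Rightarrow> complex"
  assumes hol: "h holomorphic_on {w. Re w > a0}" and a0: "a0 < a" and c: "c > 0"
    and bnd: "\<And>w. Re w \<ge> a \<Longrightarrow> cmod (h w) \<le> B"
  shows "integrable lborel (\<lambda>b. h (Complex a b) / of_real (c^2 + (y - b)^2))"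
    and "(\<integral>b. h (Complex a b) / of_real (c^2 + (y - b)^2) \<partial>lborel) = of_real (pi / c) * h (Complex (a + c) y)"
proof -
  define F where "F b = h (Complex a b) / of_real (c^2 + (y - b)^2)" for b
  define \<zeta> where "\<zeta> = Complex (a + c) y"
  define \<zeta>' where "\<zeta>' = Complex (a - c) y"
  define k where "k = (\<lambda>w. h w * (\<zeta>' - \<zeta>) / ((\<zeta> - w) * (\<zeta>' - w)))"
  have B0: "B \<ge> 0" using bnd[of a] norm_ge_zero order_trans by (metis Re_complex_of_real order_refl)
  have pos: "c^2 + (y - b)^2 > 0" for b using c by (simp add: add_pos_nonneg)
  have cl: "continuous_on UNIV (\<lambda>b. h (Complex a b))"
  proof -
    have "continuous_on {w. Re w > a0} h" using hol holomorphic_on_imp_continuous_on by blast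
    moreover have "continuous_on UNIV (\<lambda>b::real. Complex a b)" unfolding Complex_eq' by (intro continuous_intros)
    moreover have "(\<lambda>b::real. Complex a b) ` UNIV \<subseteq> {w. Re w > a0}" using a0 by auto
    ultimately show ?thesis using continuous_on_compose2 by blast
  qed
  have cF: "continuous_on UNIV F"
    unfolding F_def using pos by (intro continuous_intros cl) (metis of_real_eq_0_iff less_irrefl)
  have Fmeas: "F \<in> borel_measurable lborel"
    using cF by (simp add: borel_measurable_continuous_onI)
  have intF: "integrable lborel F"
  proof (rule Bochner_Integration.integrable_bound[OF _ Fmeas])
    show "integrable lborel (\<lambda>x. B * (1 / (c^2 + (y - x)^2)))"
      using integrable_mult_right[OF cauchy_kernel_integrable[OF c, of y], of B] by simp
    show "AE x in lborel. norm (F x) \<le> norm (B * (1 / (c^2 + (y - x)^2)))"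
    proof (rule AE_I2)
      fix x
      have nn: "cmod (of_real (c^2 + (y-x)^2)) = c^2+(y-x)^2" using pos[of x] by (simp only: norm_of_real abs_of_pos)
      have "norm (F x) = cmod (h (Complex a x)) / (c^2 + (y - x)^2)"
        unfolding F_def norm_divide nn ..
      also have "\<dots> \<le> B / (c^2 + (y - x)^2)"
        using bnd[of "Complex a x"] pos[of x] by (simp add: divide_right_mono)
      finally show "norm (F x) \<le> norm (B * (1 / (c^2 + (y - x)^2)))" using B0 pos[of x] by simp
    qed
  qed
  have Feq: "F = (\<lambda>b. h (Complex a b) / of_real (c^2 + (y - b)^2))" by (rule ext) (simp only: F_def)
  show "integrable lborel (\<lambda>b. h (Complex a b) / of_real (c^2 + (y - b)^2))" using intF unfolding Feq .
  have kF: "k (Complex a b) = of_real (2 * c) * F b" for b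
  proof -
    have e1: "(\<zeta> - Complex a b) * (\<zeta>' - Complex a b) = - of_real (c^2 + (y - b)^2)"
      by (simp add: \<zeta>_def \<zeta>'_def complex_eq_iff power2_eq_square algebra_simps)
    have e2: "\<zeta>' - \<zeta> = - of_real (2 * c)" by (simp add: \<zeta>_def \<zeta>'_def complex_eq_iff)
    show ?thesis unfolding k_def e1 e2 F_def
      by (simp add: mult.commute del: of_real_add of_real_power of_real_diff of_real_mult)
  qed
  have Jeq: "integral {-R..R} (\<lambda>b. k (Complex a b)) = of_real (2 * c) * (\<integral>x. indicator {-R..R} x *\<^sub>R F x \<partial>lborel)" for R
  proof -
    have si: "set_integrable lborel {-R..R} (\<lambda>b. k (Complex a b))"
      unfolding set_integrable_def kF by (intro integrable_mult_indicator integrable_mult_right intF) auto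
    have "integral {-R..R} (\<lambda>b. k (Complex a b)) = set_lebesgue_integral lborel {-R..R} (\<lambda>b. k (Complex a b))"
      using set_borel_integral_eq_integral(2)[OF si] by simp
    also have "\<dots> = (\<integral>x. of_real (2 * c) * (indicator {-R..R} x *\<^sub>R F x) \<partial>lborel)"
      unfolding set_lebesgue_integral_def kF by (intro Bochner_Integration.integral_cong) (auto simp: indicator_def)
    also have "\<dots> = of_real (2 * c) * (\<integral>x. indicator {-R..R} x *\<^sub>R F x \<partial>lborel)"
      by (rule Bochner_Integration.integral_mult_right) (intro integrable_mult_indicator intF, auto)
    finally show ?thesis .
  qed
  have lim1: "((\<lambda>R. \<integral>x. indicator {-R..R} x *\<^sub>R F x \<partial>lborel) \<longlongrightarrow> integral\<^sup>L lborel F) at_top"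
  proof (rule integral_dominated_convergence_at_top[where w = "\<lambda>x. norm (F x)"])
    show "F \<in> borel_measurable lborel" by (rule Fmeas)
    show "(\<lambda>x. indicator {-t..t} x *\<^sub>R F x) \<in> borel_measurable lborel" for t :: real
      using Fmeas by measurable
    show "integrable lborel (\<lambda>x. norm (F x))" using intF by (rule integrable_norm)
    show "AE x in lborel. ((\<lambda>i. indicator {-i..i} x *\<^sub>R F x) \<longlongrightarrow> F x) at_top"
    proof (rule AE_I2)
      fix x :: real
      have "eventually (\<lambda>i. indicator {-i..i} x *\<^sub>R F x = F x) at_top"
        using eventually_ge_at_top[of "\<bar>x\<bar>"] by eventually_elim (auto simp: indicator_def)
      then show "((\<lambda>i. indicator {-i..i} x *\<^sub>R F x) \<longlongrightarrow> F x) at_top"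
        by (rule tendsto_eventually)
    qed
    show "\<forall>\<^sub>F i in at_top. AE x in lborel. norm (indicator {-i..i} x *\<^sub>R F x) \<le> norm (F x)"
      by (intro always_eventually allI AE_I2) (auto simp: indicator_def)
  qed
  have est: "eventually (\<lambda>R. cmod (of_real (2 * c) * (\<integral>x. indicator {-R..R} x *\<^sub>R F x \<partial>lborel) - 2 * pi * h \<zeta>)
      \<le> 8 * c * B * R / (R - \<bar>y\<bar> - c)^2) at_top"
    using eventually_gt_at_top[of "\<bar>y\<bar> + c + 1"]
  proof eventually_elim
    case (elim R)
    show ?case using rect_est[OF hol a0 c bnd elim] unfolding Jeq[symmetric]
      by (simp add: \<zeta>_def \<zeta>'_def k_def)
  qed
  have lim0: "((\<lambda>R. 8 * c * B * R / (R - \<bar>y\<bar> - c)^2) \<longlongrightarrow> 0) at_top" by real_asymp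
  have "((\<lambda>R. of_real (2 * c) * (\<integral>x. indicator {-R..R} x *\<^sub>R F x \<partial>lborel) - 2 * pi * h \<zeta>) \<longlongrightarrow> 0) at_top"
    by (rule Lim_null_comparison[OF est lim0])
  then have l2: "((\<lambda>R. of_real (2 * c) * (\<integral>x. indicator {-R..R} x *\<^sub>R F x \<partial>lborel)) \<longlongrightarrow> 2 * pi * h \<zeta>) at_top"
    by (simp add: LIM_zero_iff)
  have l1: "((\<lambda>R. of_real (2 * c) * (\<integral>x. indicator {-R..R} x *\<^sub>R F x \<partial>lborel)) \<longlongrightarrow> of_real (2 * c) * integral\<^sup>L lborel F) at_top"
    by (intro tendsto_intros lim1)
  have "of_real (2 * c) * integral\<^sup>L lborel F = 2 * pi * h \<zeta>"
    using tendsto_unique[OF _ l1 l2] by simp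
  then have "integral\<^sup>L lborel F = of_real (pi / c) * h \<zeta>"
    using c by (simp add: field_simps)
  then show "(\<integral>b. h (Complex a b) / of_real (c^2 + (y - b)^2) \<partial>lborel) = of_real (pi / c) * h (Complex (a + c) y)"
    unfolding Feq \<zeta>_def .
qed

context Bclass
begin

lemma Gi_nonneg: "Gi s \<ge> 0" by (simp add: Gi_def Gf_nonneg)

definition "phi t = (LINT s|lborel. indicator {t..2*t} s * Gi s)"

lemma phi_bound: assumes t: "t > 0" shows "t * Gf f (2*t) \<le> phi t"
proof -
  have hb: "has_bochner_integral lborel (\<lambda>s. indicator {t..2*t} s *\<^sub>R Gf f (2*t)) (measure lborel {t..2*t} *\<^sub>R Gf f (2*t))"
    by (rule has_bochner_integral_indicator) (auto simp: emeasure_lborel_Icc_eq)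
  have m: "measure lborel {t..2*t} = t" using t by simp
  have "t * Gf f (2*t) = (LINT s|lborel. indicator {t..2*t} s * Gf f (2*t))"
    using has_bochner_integral_integral_eq[OF hb] m by simp
  also have "\<dots> \<le> phi t" unfolding phi_def
  proof (rule integral_mono)
    show "integrable lborel (\<lambda>s. indicator {t..2*t} s * Gf f (2*t))"
      using integrable.intros[OF hb] by simp
    show "integrable lborel (\<lambda>s. indicator {t..2*t} s * Gi s)"
      using integrable_mult_indicator[OF _ Gi_integrable, of "{t..2*t}"] by simp
    fix s
    show "indicator {t..2*t} s * Gf f (2*t) \<le> indicator {t..2*t} s * Gi s"
    proof (cases "s \<in> {t..2*t}")
      case True
      then have "Gf f (2*t) \<le> Gf f s" using t by (intro Gf_antimono) auto
      then show ?thesis using True t by (simp add: Gi_def)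
    qed simp
  qed
  finally show ?thesis .
qed

lemma phi_dom:
  fixes l u :: "real \<Rightarrow> real"
  assumes "\<And>s. s > 0 \<Longrightarrow> eventually (\<lambda>x. s \<notin> {l x..u x}) at_top"
  shows "((\<lambda>x. LINT s|lborel. indicator {l x..u x} s * Gi s) \<longlongrightarrow> 0) at_top"
proof -
  have m1: "(\<lambda>s. 0::real) \<in> borel_measurable lborel" by simp
  have m2: "(\<lambda>s. indicator {l x..u x} s * Gi s) \<in> borel_measurable lborel" for x
    using Gi_meas by measurable
  have ae: "AE s in lborel. ((\<lambda>x. indicator {l x..u x} s * Gi s) \<longlongrightarrow> 0) at_top"
  proof (rule AE_I2)
    fix s :: real
    show "((\<lambda>x. indicator {l x..u x} s * Gi s) \<longlongrightarrow> 0) at_top"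
    proof (cases "s > 0")
      case True
      have "eventually (\<lambda>x. indicator {l x..u x} s * Gi s = 0) at_top"
        using assms[OF True] by eventually_elim (auto simp: indicator_def)
      then show ?thesis by (rule tendsto_eventually)
    next
      case False then show ?thesis by (simp add: Gi_def)
    qed
  qed
  have ev: "\<forall>\<^sub>F x in at_top. AE s in lborel. norm (indicator {l x..u x} s * Gi s) \<le> Gi s"
    by (intro always_eventually allI AE_I2) (auto simp: indicator_def Gi_nonneg)
  have "((\<lambda>x. LINT s|lborel. indicator {l x..u x} s * Gi s) \<longlongrightarrow> (LINT s|lborel. (\<lambda>s. 0::real) s)) at_top"
    using integral_dominated_convergence_at_top[OF m1 m2 Gi_integrable ae ev] by simp
  then show ?thesis by simp
qed

lemma phi_top: "(phi \<longlongrightarrow> 0) at_top"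
  unfolding phi_def
proof (rule phi_dom)
  fix s :: real assume "s > 0"
  show "eventually (\<lambda>x. s \<notin> {x..2*x}) at_top"
    using eventually_gt_at_top[of s] by eventually_elim auto
qed

lemma phi_zero: "(phi \<longlongrightarrow> 0) (at_right 0)"
  unfolding filterlim_at_right_to_top phi_def
proof (rule phi_dom)
  fix s :: real assume s: "s > 0"
  show "eventually (\<lambda>x. s \<notin> {inverse x..2 * inverse x}) at_top"
    using eventually_gt_at_top[of "2 / s"]
  proof eventually_elim
    case (elim x)
    then have "x > 0" using s by (smt (verit) divide_pos_pos)
    then have "2 * inverse x < s" using elim s by (simp add: field_simps)
    then show ?case by auto
  qed
qed

lemma tD1_bound: assumes z: "Re z \<ge> 0" and t: "t > 0"
  shows "norm (of_real t * deriv f (z + of_real (2*t))) \<le> phi t"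
proof -
  have "cmod (deriv f (z + of_real (2*t))) \<le> Gf f (2*t)"
    using z t by (intro d1_le_Gf) auto
  then have "norm (of_real t * deriv f (z + of_real (2*t))) \<le> t * Gf f (2*t)"
    using t by (simp add: norm_mult mult_left_mono)
  also have "\<dots> \<le> phi t" by (rule phi_bound[OF t])
  finally show ?thesis .
qed

lemma tD1_top: assumes z: "Re z \<ge> 0"
  shows "((\<lambda>t. of_real t * deriv f (z + of_real (2*t))) \<longlongrightarrow> 0) at_top"
  by (rule Lim_null_comparison[OF _ phi_top])
     (rule eventually_mono[OF eventually_gt_at_top[of 0]], rule tD1_bound[OF z])

lemma tD1_zero: assumes z: "Re z \<ge> 0"
  shows "((\<lambda>t. of_real t * deriv f (z + of_real (2*t))) \<longlongrightarrow> 0) (at_right 0)"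
  by (rule Lim_null_comparison[OF _ phi_zero])
     (rule eventually_mono[OF eventually_at_right_less[of 0]], rule tD1_bound[OF z])

end

context Bclass
begin

definition "Dfun w t = indicator {0<..} t *\<^sub>R deriv f (w + of_real t)"

lemma cont_D1: "continuous_on rhp (deriv f)"
  using hol1 holomorphic_on_imp_continuous_on by blast

lemma isCont_D1: "Re w > 0 \<Longrightarrow> isCont (deriv f) w"
  using cont_D1 open_rhp by (simp add: continuous_on_eq_continuous_at rhp_def)

lemma Dfun_meas: assumes "Re w \<ge> 0" shows "Dfun w \<in> borel_measurable borel"
proof -
  have "(\<lambda>t::real. w + of_real t) ` {0<..} \<subseteq> rhp" using assms by (auto simp: rhp_def)
  moreover have "continuous_on {0<..} (\<lambda>t::real. w + of_real t)" by (intro continuous_intros)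
  ultimately have "continuous_on {0<..} (\<lambda>t::real. deriv f (w + of_real t))"
    using cont_D1 continuous_on_compose2 by blast
  then have "(\<lambda>t. indicator {0<..} t *\<^sub>R deriv f (w + of_real t)) \<in> borel_measurable borel"
    by (intro borel_measurable_continuous_on_indicator) auto
  then show ?thesis unfolding Dfun_def[abs_def] .
qed

lemma Dfun_bnd: assumes "Re w \<ge> 0" shows "norm (Dfun w t) \<le> Gi t"
proof (cases "t > 0")
  case True
  have "cmod (deriv f (w + of_real t)) \<le> Gf f t" using assms True by (intro d1_le_Gf) auto
  then show ?thesis using True by (simp add: Dfun_def Gi_def)
qed (simp add: Dfun_def Gi_def)

lemma Dfun_int: assumes "Re w \<ge> 0" shows "integrable lborel (Dfun w)"
proof (rule Bochner_Integration.integrable_bound[OF Gi_integrable])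
  show "Dfun w \<in> borel_measurable lborel" using Dfun_meas[OF assms] by simp
  show "AE x in lborel. norm (Dfun w x) \<le> norm (Gi x)"
    using Dfun_bnd[OF assms] Gi_nonneg by (intro AE_I2) (metis abs_of_nonneg real_norm_def)
qed

lemma rep: assumes w: "Re w > 0" shows "f w = - integral\<^sup>L lborel (Dfun w)"
proof -
  let ?g = "\<lambda>t. deriv f (w + of_real t)"
  have wr: "Re w \<ge> 0" using w by simp
  have eq: "f (w + of_real T) - f w = (LINT t|lborel. indicator {..T} t *\<^sub>R Dfun w t)" if T: "T \<ge> 0" for T
  proof -
    have "f (w + of_real T) - f w = integral {0..T} ?g"
      using deriv_line_has_integral[OF hol w T] by (simp add: integral_unique)
    also have si: "set_integrable lborel {0..T} ?g"
      unfolding set_integrable_def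
      by (rule borel_integrable_compact) (auto intro: continuous_on_subset[OF cont_deriv_line[OF hol w]])
    have "integral {0..T} ?g = set_lebesgue_integral lborel {0..T} ?g"
      using set_borel_integral_eq_integral(2)[OF si] by simp
    also have "\<dots> = (LINT t|lborel. indicator {..T} t *\<^sub>R Dfun w t)"
      unfolding set_lebesgue_integral_def
    proof (rule integral_cong_AE)
      show "(\<lambda>t. indicator {0..T} t *\<^sub>R ?g t) \<in> borel_measurable lborel"
        using si unfolding set_integrable_def by (rule borel_measurable_integrable)
      show "(\<lambda>t. indicator {..T} t *\<^sub>R Dfun w t) \<in> borel_measurable lborel"
        using Dfun_meas[OF wr] by measurable
      show "AE t in lborel. indicator {0..T} t *\<^sub>R ?g t = indicator {..T} t *\<^sub>R Dfun w t"
        using AE_lborel_singleton[of 0] by eventually_elim (auto simp: Dfun_def indicator_def)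
    qed
    finally show ?thesis .
  qed
  have m1: "Dfun w \<in> borel_measurable lborel" using Dfun_meas[OF wr] by simp
  have m2: "(\<lambda>t. indicator {..T} t *\<^sub>R Dfun w t) \<in> borel_measurable lborel" for T
    using Dfun_meas[OF wr] by measurable
  have ae: "AE t in lborel. ((\<lambda>T. indicator {..T} t *\<^sub>R Dfun w t) \<longlongrightarrow> Dfun w t) at_top"
  proof (rule AE_I2)
    fix t :: real
    have "eventually (\<lambda>T. indicator {..T} t *\<^sub>R Dfun w t = Dfun w t) at_top"
      using eventually_ge_at_top[of t] by eventually_elim (auto simp: indicator_def)
    then show "((\<lambda>T. indicator {..T} t *\<^sub>R Dfun w t) \<longlongrightarrow> Dfun w t) at_top"
      by (rule tendsto_eventually)
  qed
  have ev: "\<forall>\<^sub>F T in at_top. AE t in lborel. norm (indicator {..T} t *\<^sub>R Dfun w t) \<le> Gi t"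
    using Dfun_bnd[OF wr] Gi_nonneg
    by (intro always_eventually allI AE_I2) (auto simp: indicator_def)
  have l1: "((\<lambda>T. LINT t|lborel. indicator {..T} t *\<^sub>R Dfun w t) \<longlongrightarrow> integral\<^sup>L lborel (Dfun w)) at_top"
    using integral_dominated_convergence_at_top[OF m1 m2 Gi_integrable ae ev] by simp
  have "((\<lambda>T. f (w + of_real T)) \<longlongrightarrow> 0) at_top"
    by (rule lim_at_inf_compose[OF lim0]) (use filterlim_tendsto_add_at_top[OF tendsto_const filterlim_ident, of "Re w"] in simp)
  then have l2: "((\<lambda>T. f (w + of_real T) - f w) \<longlongrightarrow> 0 - f w) at_top"
    by (intro tendsto_intros)
  have l1': "((\<lambda>T. f (w + of_real T) - f w) \<longlongrightarrow> integral\<^sup>L lborel (Dfun w)) at_top"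
    by (rule Lim_transform_eventually[OF l1]) (rule eventually_mono[OF eventually_ge_at_top[of 0]], rule eq[symmetric])
  have "0 - f w = integral\<^sup>L lborel (Dfun w)" using tendsto_unique[OF _ l2 l1'] by simp
  then show ?thesis by (metis diff_0 minus_minus)
qed

lemma ext_lim: assumes z: "Re z \<ge> 0" shows "(f \<longlongrightarrow> - integral\<^sup>L lborel (Dfun z)) (at z within rhp)"
  unfolding tendsto_at_iff_sequentially
proof (intro allI impI)
  fix X :: "nat \<Rightarrow> complex"
  assume X: "\<forall>i. X i \<in> rhp - {z}" and Xl: "X \<longlonglongrightarrow> z"
  have Xr: "Re (X i) > 0" for i using X by (auto simp: rhp_def)
  have "(\<lambda>i. integral\<^sup>L lborel (Dfun (X i))) \<longlonglongrightarrow> integral\<^sup>L lborel (Dfun z)"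
  proof (rule integral_dominated_convergence[where w = Gi])
    show "Dfun z \<in> borel_measurable lborel" using Dfun_meas[OF z] by simp
    show "Dfun (X i) \<in> borel_measurable lborel" for i using Dfun_meas[of "X i"] Xr[of i] by simp
    show "integrable lborel Gi" by (rule Gi_integrable)
    show "AE t in lborel. (\<lambda>i. Dfun (X i) t) \<longlonglongrightarrow> Dfun z t"
    proof (rule AE_I2)
      fix t :: real
      show "(\<lambda>i. Dfun (X i) t) \<longlonglongrightarrow> Dfun z t"
      proof (cases "t > 0")
        case True
        have "isCont (deriv f) (z + of_real t)" using z True by (intro isCont_D1) simp
        moreover have "(\<lambda>i. X i + of_real t) \<longlonglongrightarrow> z + of_real t" using Xl by (intro tendsto_intros)
        ultimately have "(\<lambda>i. deriv f (X i + of_real t)) \<longlonglongrightarrow> deriv f (z + of_real t)"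
          by (rule isCont_tendsto_compose)
        then show ?thesis using True by (simp add: Dfun_def)
      qed (simp add: Dfun_def)
    qed
    show "AE t in lborel. norm (Dfun (X i) t) \<le> Gi t" for i
      using Dfun_bnd[of "X i"] Xr[of i] by (intro AE_I2) simp
  qed
  then have "(\<lambda>i. - integral\<^sup>L lborel (Dfun (X i))) \<longlonglongrightarrow> - integral\<^sup>L lborel (Dfun z)"
    by (intro tendsto_intros)
  moreover have "(f \<circ> X) = (\<lambda>i. - integral\<^sup>L lborel (Dfun (X i)))" using rep Xr by (auto simp: fun_eq_iff)
  ultimately show "(f \<circ> X) \<longlonglongrightarrow> - integral\<^sup>L lborel (Dfun z)" by simp
qed

lemma ext_val_eq: assumes z: "Re z \<ge> 0" shows "ext_val f z = - integral\<^sup>L lborel (Dfun z)"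
proof -
  have "z islimpt rhp"
    unfolding islimpt_approachable
  proof (intro allI impI)
    fix e :: real assume e: "e > 0"
    show "\<exists>x'\<in>rhp. x' \<noteq> z \<and> dist x' z < e"
      using z e by (intro bexI[of _ "z + of_real (e/2)"]) (auto simp: rhp_def dist_norm)
  qed
  then have "at z within rhp \<noteq> bot" using trivial_limit_within by blast
  then show ?thesis unfolding ext_val_def using ext_lim[OF z] by (rule tendsto_Lim)
qed

end

context Bclass
begin

lemma tD2_bound: assumes z: "Re z \<ge> 0" and t: "t > 0"
  shows "cmod (of_real t * deriv (deriv f) (z + of_real (2*t))) \<le> Gf f t"
proof -
  let ?w = "z + of_real (2*t)"
  have sub: "cball ?w t \<subseteq> rhp"
  proof
    fix x assume "x \<in> cball ?w t"
    then have "cmod (?w - x) \<le> t" by (simp add: dist_norm)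
    moreover have "Re ?w - Re x \<le> cmod (?w - x)" using abs_Re_le_cmod[of "?w - x"] by simp
    ultimately show "x \<in> rhp" using z t by (simp add: rhp_def)
  qed
  have h1: "deriv f holomorphic_on ball ?w t" using hol1 sub ball_subset_cball by (blast intro: holomorphic_on_subset)
  have c1: "continuous_on (cball ?w t) (deriv f)" using cont_D1 sub continuous_on_subset by blast
  have b1: "cmod (deriv f x) \<le> Gf f t" if "cmod (?w - x) = t" for x
  proof (rule d1_le_Gf[OF t])
    have "Re ?w - Re x \<le> cmod (?w - x)" using abs_Re_le_cmod[of "?w - x"] by simp
    then show "t \<le> Re x" using that z by simp
  qed
  have "cmod ((deriv ^^ 1) (deriv f) ?w) \<le> fact 1 * Gf f t / t ^ 1"
    by (rule Cauchy_inequality[OF h1 c1 t b1])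
  then have "cmod (deriv (deriv f) ?w) \<le> Gf f t / t" by simp
  then show ?thesis using t by (simp add: norm_mult field_simps)
qed

lemma Q_integrable: assumes z: "Re z \<ge> 0"
  shows "set_integrable lborel {0<..} (\<lambda>t. of_real t * deriv (deriv f) (z + of_real (2*t)))"
  unfolding set_integrable_def
proof (rule Bochner_Integration.integrable_bound[OF Gi_integrable])
  have "(\<lambda>t::real. z + of_real (2*t)) ` {0<..} \<subseteq> rhp" using z by (auto simp: rhp_def)
  moreover have "continuous_on {0<..} (\<lambda>t::real. z + of_real (2*t))" by (intro continuous_intros)
  moreover have "continuous_on rhp (deriv (deriv f))" using hol2 holomorphic_on_imp_continuous_on by blast
  ultimately have "continuous_on {0<..} (\<lambda>t::real. deriv (deriv f) (z + of_real (2*t)))"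
    using continuous_on_compose2 by blast
  then have "continuous_on {0<..} (\<lambda>t::real. of_real t * deriv (deriv f) (z + of_real (2*t)))"
    by (intro continuous_intros)
  then show "(\<lambda>t. indicator {0<..} t *\<^sub>R (of_real t * deriv (deriv f) (z + of_real (2*t)))) \<in> borel_measurable lborel"
    using borel_measurable_continuous_on_indicator[of "{0<..}" "\<lambda>t. of_real t * deriv (deriv f) (z + of_real (2*t))"] by simp
  show "AE t in lborel. norm (indicator {0<..} t *\<^sub>R (of_real t * deriv (deriv f) (z + of_real (2*t)))) \<le> norm (Gi t)"
  proof (rule AE_I2)
    fix t :: real
    show "norm (indicator {0<..} t *\<^sub>R (of_real t * deriv (deriv f) (z + of_real (2*t)))) \<le> norm (Gi t)"
      using tD2_bound[OF z, of t] Gi_nonneg[of t] by (cases "t > 0") (auto simp: Gi_def)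
  qed
qed

lemma Q_value: assumes z: "Re z \<ge> 0"
  shows "(\<integral>t. indicator {0<..} t *\<^sub>R (of_real t * deriv (deriv f) (z + of_real (2*t))) \<partial>lborel) = ext_val f z / 4"
proof -
  define E where "E = ext_val f z"
  let ?q = "\<lambda>t::real. of_real t * deriv (deriv f) (z + of_real (2*t))"
  define F where "F t = of_real t * deriv f (z + of_real (2*t)) / 2 - f (z + of_real (2*t)) / 4" for t :: real
  have inr: "z + of_real (2*t) \<in> rhp" if "t > 0" for t using z that by (simp add: rhp_def)
  have "(LBINT t=ereal 0..\<infinity>. ?q t) = 0 - (- E / 4)"
  proof (rule interval_integral_FTC_integrable[where F = F])
    show "ereal 0 < \<infinity>" by simp
    fix t :: real assume "ereal 0 < ereal t" "ereal t < \<infinity>"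
    then have t: "t > 0" by simp
    define p where "p = z + 2 * complex_of_real t"
    have pr: "p \<in> rhp" using inr[OF t] by (simp add: p_def)
    have d1: "(f has_field_derivative deriv f p) (at p)"
      by (rule holomorphic_derivI[OF hol open_rhp pr])
    have d2: "(deriv f has_field_derivative deriv (deriv f) p) (at p)"
      by (rule holomorphic_derivI[OF hol1 open_rhp pr])
    have dg: "((\<lambda>s. z + 2 * s) has_field_derivative 2) (at (complex_of_real t))"
      by (auto intro!: derivative_eq_intros)
    have df: "((\<lambda>s. f (z + 2 * s)) has_field_derivative deriv f p * 2) (at (complex_of_real t))"
      using DERIV_chain2[where f = f and g = "\<lambda>s. z + 2 * s", OF _ dg] d1 by (simp add: p_def)
    have ddf: "((\<lambda>s. deriv f (z + 2 * s)) has_field_derivative deriv (deriv f) p * 2) (at (complex_of_real t))"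
      using DERIV_chain2[where f = "deriv f" and g = "\<lambda>s. z + 2 * s", OF _ dg] d2 by (simp add: p_def)
    define Fc where "Fc s = s * deriv f (z + 2 * s) / 2 - f (z + 2 * s) / 4" for s :: complex
    have dFc: "(Fc has_field_derivative ?q t) (at (of_real t))"
    proof -
      have "(Fc has_field_derivative
          (complex_of_real t * (deriv (deriv f) p * 2) + 1 * deriv f (z + 2 * complex_of_real t)) / 2 - deriv f p * 2 / 4) (at (of_real t))"
        unfolding Fc_def[abs_def]
        by (intro DERIV_diff DERIV_cdivide DERIV_mult'[OF DERIV_ident ddf] df)
      moreover have "(complex_of_real t * (deriv (deriv f) p * 2) + 1 * deriv f (z + 2 * complex_of_real t)) / 2 - deriv f p * 2 / 4 = ?q t"
        by (simp add: p_def field_simps)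
      ultimately show ?thesis by simp
    qed
    have ofr: "(complex_of_real has_vector_derivative 1) (at t)"
      by (auto intro!: derivative_eq_intros)
    have "((Fc \<circ> of_real) has_vector_derivative (1 * ?q t)) (at t)"
      by (rule field_vector_diff_chain_at[OF ofr dFc])
    moreover have "Fc \<circ> of_real = F" by (rule ext) (simp add: Fc_def F_def)
    ultimately show "(F has_vector_derivative ?q t) (at t)" by simp
    have "isCont (deriv (deriv f)) (z + of_real (2*t))"
      using hol2 open_rhp inr[OF t] by (metis continuous_on_eq_continuous_at holomorphic_on_imp_continuous_on)
    moreover have "isCont (\<lambda>t::real. z + of_real (2*t)) t" by (intro continuous_intros)
    ultimately have "isCont (\<lambda>t::real. deriv (deriv f) (z + of_real (2*t))) t"
      using isCont_o2 by blast
    then show "isCont ?q t" by (intro continuous_intros)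
  next
    show "set_integrable lborel (einterval (ereal 0) \<infinity>) ?q" using Q_integrable[OF z] by simp
  next
    have lt: "((\<lambda>t. of_real t * deriv f (z + of_real (2*t))) \<longlongrightarrow> 0) (at_right 0)" by (rule tD1_zero[OF z])
    have fl: "filterlim (\<lambda>t::real. z + of_real (2*t)) (at z within rhp) (at_right 0)"
    proof (rule filterlim_at_withinI)
      show "((\<lambda>t::real. z + of_real (2*t)) \<longlongrightarrow> z) (at_right 0)"
        by (rule tendsto_eq_intros refl | simp)+
      show "\<forall>\<^sub>F t in at_right 0. z + of_real (2*t) \<in> rhp - {z}"
        using eventually_at_right_less[of 0] by eventually_elim (use z in \<open>auto simp: rhp_def\<close>)
    qed
    have lf: "((\<lambda>t. f (z + of_real (2*t))) \<longlongrightarrow> E) (at_right 0)"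
      unfolding E_def ext_val_eq[OF z] using filterlim_compose[OF ext_lim[OF z] fl] .
    have "(F \<longlongrightarrow> 0 / 2 - E / 4) (at_right 0)"
      unfolding F_def by (intro tendsto_intros lt lf) auto
    then show "((F \<circ> real_of_ereal) \<longlongrightarrow> - E / 4) (at_right (ereal 0))"
      by (simp add: ereal_tendsto_simps1)
  next
    have lt: "((\<lambda>t. of_real t * deriv f (z + of_real (2*t))) \<longlongrightarrow> 0) at_top" by (rule tD1_top[OF z])
    have lf: "((\<lambda>t. f (z + of_real (2*t))) \<longlongrightarrow> 0) at_top"
      by (rule lim_at_inf_compose[OF lim0]) (simp, real_asymp)
    have "(F \<longlongrightarrow> 0 / 2 - 0 / 4) at_top"
      unfolding F_def by (intro tendsto_intros lt lf) auto
    then show "((F \<circ> real_of_ereal) \<longlongrightarrow> 0) (at_left \<infinity>)"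
      by (simp add: ereal_tendsto_simps1)
  qed
  moreover have "(LBINT t=ereal 0..\<infinity>. ?q t) = (\<integral>t. indicator {0<..} t *\<^sub>R ?q t \<partial>lborel)"
    by (simp add: interval_lebesgue_integral_def set_lebesgue_integral_def)
  ultimately show ?thesis by (simp add: E_def)
qed

lemma main_loc: assumes z: "Re z \<ge> 0"
  shows "ext_val f z =
    complex_of_real (4 / pi) *
      (\<integral> a. indicator {0<..} a *\<^sub>R
          (complex_of_real (a * (Re z + a)) *
            (\<integral> b. deriv (deriv f) (Complex a b) /
                 complex_of_real ((Re z + a)\<^sup>2 + (Im z - b)\<^sup>2) \<partial>lborel)) \<partial>lborel)"
proof -
  let ?q = "\<lambda>t::real. of_real t * deriv (deriv f) (z + of_real (2*t))"
  have inner: "(\<integral> b. deriv (deriv f) (Complex a b) / complex_of_real ((Re z + a)\<^sup>2 + (Im z - b)\<^sup>2) \<partial>lborel)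
      = of_real (pi / (Re z + a)) * deriv (deriv f) (z + of_real (2*a))" if a: "a > 0" for a
  proof -
    have h2: "deriv (deriv f) holomorphic_on {w. Re w > 0}" using hol2 by (simp add: rhp_def)
    have bnd: "cmod (deriv (deriv f) w) \<le> 8 * M / a^2" if "Re w \<ge> a" for w
    proof -
      have "cmod (deriv (deriv f) w) \<le> 8 * M / (Re w)^2" using d2_bnd[of w] that a by simp
      also have "\<dots> \<le> 8 * M / a^2"
        using that a M_nonneg by (intro divide_left_mono power_mono mult_pos_pos) auto
      finally show ?thesis .
    qed
    have c: "Re z + a > 0" using z a by simp
    have "(\<integral> b. deriv (deriv f) (Complex a b) / complex_of_real ((Re z + a)\<^sup>2 + (Im z - b)\<^sup>2) \<partial>lborel)
        = of_real (pi / (Re z + a)) * deriv (deriv f) (Complex (a + (Re z + a)) (Im z))"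
      by (rule poisson_line(2)[OF h2 a c bnd])
    moreover have "Complex (a + (Re z + a)) (Im z) = z + of_real (2*a)" by (simp add: complex_eq_iff)
    ultimately show ?thesis by simp
  qed
  have "(\<integral> a. indicator {0<..} a *\<^sub>R
          (complex_of_real (a * (Re z + a)) *
            (\<integral> b. deriv (deriv f) (Complex a b) /
                 complex_of_real ((Re z + a)\<^sup>2 + (Im z - b)\<^sup>2) \<partial>lborel)) \<partial>lborel)
      = (\<integral> a. of_real pi * (indicator {0<..} a *\<^sub>R ?q a) \<partial>lborel)"
  proof (rule Bochner_Integration.integral_cong[OF refl])
    fix a :: real
    show "indicator {0<..} a *\<^sub>R
          (complex_of_real (a * (Re z + a)) *
            (\<integral> b. deriv (deriv f) (Complex a b) /
                 complex_of_real ((Re z + a)\<^sup>2 + (Im z - b)\<^sup>2) \<partial>lborel))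
        = of_real pi * (indicator {0<..} a *\<^sub>R ?q a)"
    proof (cases "a > 0")
      case True
      have c: "Re z + a > 0" using z True by simp
      have r: "a * (Re z + a) * (pi / (Re z + a)) = pi * a" using c by (simp add: field_simps)
      have "complex_of_real (a * (Re z + a)) * complex_of_real (pi / (Re z + a)) = of_real pi * of_real a"
        by (metis of_real_mult r)
      then have rr: "complex_of_real (a * (Re z + a)) * complex_of_real (pi / (Re z + a)) = of_real pi * of_real a" .
      let ?D = "deriv (deriv f) (z + of_real (2*a))"
      have "indicator {0<..} a *\<^sub>R
          (complex_of_real (a * (Re z + a)) *
            (\<integral> b. deriv (deriv f) (Complex a b) /
                 complex_of_real ((Re z + a)\<^sup>2 + (Im z - b)\<^sup>2) \<partial>lborel))
          = complex_of_real (a * (Re z + a)) * (complex_of_real (pi / (Re z + a)) * ?D)"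
        unfolding inner[OF True] using True by simp
      also have "\<dots> = (complex_of_real (a * (Re z + a)) * complex_of_real (pi / (Re z + a))) * ?D"
        by (rule mult.assoc[symmetric])
      also have "\<dots> = of_real pi * (of_real a * ?D)" unfolding rr by (rule mult.assoc)
      also have "\<dots> = of_real pi * (indicator {0<..} a *\<^sub>R ?q a)" using True by simp
      finally show ?thesis .
    qed simp
  qed
  also have "\<dots> = of_real pi * (\<integral> a. indicator {0<..} a *\<^sub>R ?q a \<partial>lborel)"
    by (rule Bochner_Integration.integral_mult_right) (use Q_integrable[OF z] in \<open>simp add: set_integrable_def\<close>)
  also have "\<dots> = of_real pi * (ext_val f z / 4)" unfolding Q_value[OF z] ..
  finally have eq: "(\<integral> a. indicator {0<..} a *\<^sub>R
          (complex_of_real (a * (Re z + a)) *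
            (\<integral> b. deriv (deriv f) (Complex a b) /
                 complex_of_real ((Re z + a)\<^sup>2 + (Im z - b)\<^sup>2) \<partial>lborel)) \<partial>lborel) = of_real pi * (ext_val f z / 4)" .
  show ?thesis unfolding eq by (simp add: field_simps)
qed

end

theorem mainTheorem2:
  fixes f :: "complex \<Rightarrow> complex" and z :: complex
  assumes "in_B0 f" and "Re z \<ge> 0"
  shows "ext_val f z =
    complex_of_real (4 / pi) *
      (\<integral> a. indicator {0<..} a *\<^sub>R
          (complex_of_real (a * (Re z + a)) *
            (\<integral> b. deriv (deriv f) (Complex a b) /
                 complex_of_real ((Re z + a)\<^sup>2 + (Im z - b)\<^sup>2) \<partial>lborel)) \<partial>lborel)"
proof -
  have "hB f = (\<lambda>a. indicator {0<..} a * (SUP b::real. ennreal (cmod (deriv f (Complex a b)))))"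
    by (rule ext) (simp add: hB_def)
  then interpret Bclass f
    using assms(1) unfolding in_B0_def in_B_def value_at_infinity_def
    by unfold_locales auto
  show ?thesis by (rule main_loc[OF assms(2)])
qed

end
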